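(* For every closed subset $C\subseteq A$ and every $m\in\omega$, every $g\in\mathcal{G}_m$ that fixes $C\cap A_m$ pointwise extends to a permutation $\pi\in\mathcal{G}$ that fixes $C$ pointwise.
   Context: Let $\langle P,\preccurlyeq,\preccurlyeq^\ast\rangle$ be a doubly ordered set: $\preccurlyeq$ a partial order on $P$, $\preccurlyeq^\ast$ a preorder on $P$, and $p\preccurlyeq q\Rightarrow p\preccurlyeq^\ast q$. Write $p\prec q$ for ($p\preccurlyeq q$ and $p\neq q$). For a quadruple $\langle x_0,x_1,x_2,x_3\rangle$ and $i<4$, $\mathrm{pr}_i(\langle x_0,x_1,x_2,x_3\rangle)=x_i$. For a set $S$, $\mathscr{S}(S)$ is the set of permutations of $S$. Define recursively $A_0=\{\langle0,p,\varnothing,k\rangle\mid p\in P,k\in\omega\}$ and $A_{n+1}=A_n\cup\{\langle n+1,q,a,0\rangle\mid q\in P,a\in A_n,\mathrm{pr}_1(a)\prec q\}\cup\{\langle n+1,q,a,k\rangle\mid q\in P,a\in A_n,\mathrm{pr}_1(a)\not\preccurlyeq q,\mathrm{pr}_1(a)\preccurlyeq^\ast q,k\in\omega\}$; let $A=\bigcup_{n}A_n$. Define $\mathcal{G}_0=\{f\in\mathscr{S}(A_0)\mid \mathrm{pr}_1(f(a))=\mathrm{pr}_1(a)\text{ for all }a\in A_0\}$; for $f\in\mathscr{S}(A_{n+1})$, $f\in\mathcal{G}_{n+1}$ iff $f{\upharpoonright}A_n\in\mathcal{G}_n$ and for all $b\in A_{n+1}\setminus A_n$, $\mathrm{pr}_1(f(b))=\mathrm{pr}_1(b)$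 and $\mathrm{pr}_2(f(b))=f(\mathrm{pr}_2(b))$. Let $\mathcal{G}=\{\pi\in\mathscr{S}(A)\mid \pi{\upharpoonright}A_n\in\mathcal{G}_n\text{ for all }n\}$. A subset $C\subseteq A$ is closed if (i) for all $n\in\omega$, all $a\in C\cap A_n$ and all $q\in P$ with $\mathrm{pr}_1(a)\prec q$, we have $\langle n+1,q,a,0\rangle\in C$, and (ii) for all $b\in C\setminus A_0$, $\mathrm{pr}_2(b)\in C$. *)

theory Defs
  imports Main
begin

text \<open>Set-theoretic quadruples <n,p,a,k>; the third component is either the
empty set (Emp) or another quadruple.\<close>
datatype 'p quad = Emp | Q (pr0: nat) (pr1: 'p) (pr2: "'p quad") (pr3: nat)

definition sprec :: "'p rel \<Rightarrow> 'p \<Rightarrow> 'p \<Rightarrow> bool" where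
  "sprec le p q \<longleftrightarrow> (p, q) \<in> le \<and> p \<noteq> q"

fun An :: "'p set \<Rightarrow> 'p rel \<Rightarrow> 'p rel \<Rightarrow> nat \<Rightarrow> 'p quad set" where
  "An P le les 0 = {Q 0 p Emp k | p k. p \<in> P}"
| "An P le les (Suc n) = An P le les n
     \<union> {Q (Suc n) q a 0 | q a. q \<in> P \<and> a \<in> An P le les n \<and> sprec le (pr1 a) q}
     \<union> {Q (Suc n) q a k | q a k. q \<in> P \<and> a \<in> An P le les n \<and>
            (pr1 a, q) \<notin> le \<and> (pr1 a, q) \<in> les}"

definition Aall :: "'p set \<Rightarrow> 'p rel \<Rightarrow> 'p rel \<Rightarrow> 'p quad set" where
  "Aall P le les = (\<Union>n. An P le les n)"

text \<open>A function f represents a permutation of A_n via its restriction to A_n.\<close>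
fun Gn :: "'p set \<Rightarrow> 'p rel \<Rightarrow> 'p rel \<Rightarrow> nat \<Rightarrow> ('p quad \<Rightarrow> 'p quad) set" where
  "Gn P le les 0 = {f. bij_betw f (An P le les 0) (An P le les 0) \<and>
       (\<forall>a\<in>An P le les 0. pr1 (f a) = pr1 a)}"
| "Gn P le les (Suc n) = {f. bij_betw f (An P le les (Suc n)) (An P le les (Suc n)) \<and>
       f \<in> Gn P le les n \<and>
       (\<forall>b\<in>An P le les (Suc n) - An P le les n.
           pr1 (f b) = pr1 b \<and> pr2 (f b) = f (pr2 b))}"

definition Gall :: "'p set \<Rightarrow> 'p rel \<Rightarrow> 'p rel \<Rightarrow> ('p quad \<Rightarrow> 'p quad) set" where
  "Gall P le les = {\<pi>. bij_betw \<pi> (Aall P le les) (Aall P le les) \<and>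
       (\<forall>n. \<pi> \<in> Gn P le les n)}"

definition closed_set :: "'p set \<Rightarrow> 'p rel \<Rightarrow> 'p rel \<Rightarrow> 'p quad set \<Rightarrow> bool" where
  "closed_set P le les C \<longleftrightarrow> C \<subseteq> Aall P le les \<and>
     (\<forall>n. \<forall>a\<in>C \<inter> An P le les n. \<forall>q\<in>P. sprec le (pr1 a) q \<longrightarrow> Q (Suc n) q a 0 \<in> C) \<and>
     (\<forall>b\<in>C - An P le les 0. pr2 b \<in> C)"

end

theory Submission
  imports Defs
begin

primrec ext :: "('p quad \<Rightarrow> 'p quad) \<Rightarrow> nat \<Rightarrow> 'p quad \<Rightarrow> 'p quad" where
  "ext g m Emp = g Emp"
| "ext g m (Q j q a k) = (if j \<le> m then g (Q j q a k) else Q j q (ext g m a) k)"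

lemma An_pr0: "x \<in> An P le les n \<Longrightarrow> x \<noteq> Emp \<and> pr0 x \<le> n"
proof (induction n arbitrary: x)
  case 0 then show ?case by auto
next
  case (Suc n)
  then show ?case by (cases "x \<in> An P le les n") (force dest: Suc.IH)+
qed

lemma An_mono_Suc: "An P le les n \<subseteq> An P le les (Suc n)"
  by auto

lemma An_mono: "k \<le> n \<Longrightarrow> An P le les k \<subseteq> An P le les n"
  by (induction n rule: dec_induct) (use An_mono_Suc in blast)+

lemma An_new:
  assumes "x \<in> An P le les (Suc n)" "x \<notin> An P le les n"
  shows "\<exists>q a k. x = Q (Suc n) q a k \<and> a \<in> An P le les n"
  using assms by auto

lemma Q_notin: "Q (Suc n) q a k \<notin> An P le les n"
  using An_pr0 by fastforce

lemma Gn_mono_Suc: "f \<in> Gn P le les (Suc n) \<Longrightarrow> f \<in> Gn P le les n"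
  by simp

lemma Gn_mono: "k \<le> n \<Longrightarrow> f \<in> Gn P le les n \<Longrightarrow> f \<in> Gn P le les k"
  by (induction n rule: dec_induct) auto

lemma Gn_bij: "f \<in> Gn P le les n \<Longrightarrow> bij_betw f (An P le les n) (An P le les n)"
  by (cases n) auto

lemma Gn_pr1: "f \<in> Gn P le les n \<Longrightarrow> x \<in> An P le les n \<Longrightarrow> pr1 (f x) = pr1 x"
proof (induction n arbitrary: x)
  case 0 then show ?case by auto
next
  case (Suc n)
  show ?case
  proof (cases "x \<in> An P le les n")
    case True then show ?thesis using Suc by auto
  next
    case False then show ?thesis using Suc.prems by auto
  qed
qed

lemma Gn_cong: "f \<in> Gn P le les n \<Longrightarrow> (\<forall>x\<in>An P le les n. h x = f x) \<Longrightarrow> h \<in> Gn P le les n"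
proof (induction n arbitrary: f)
  case 0
  have b: "bij_betw f (An P le les 0) (An P le les 0)" using 0(1) by (rule Gn_bij)
  have "bij_betw h (An P le les 0) (An P le les 0)"
    using bij_betw_cong[of "An P le les 0" h f "An P le les 0"] b 0(2) by blast
  moreover have "\<forall>a\<in>An P le les 0. pr1 (h a) = pr1 a"
  proof
    fix a assume a: "a \<in> An P le les 0"
    then have "h a = f a" using 0(2) by blast
    then show "pr1 (h a) = pr1 a" using Gn_pr1[OF 0(1) a] by simp
  qed
  ultimately show ?case by (simp only: Gn.simps mem_Collect_eq)
next
  case (Suc n)
  have sub: "An P le les n \<subseteq> An P le les (Suc n)" by (rule An_mono_Suc)
  have "f \<in> Gn P le les n" using Suc.prems(1) by (rule Gn_mono_Suc)
  moreover have "\<forall>x\<in>An P le les n. h x = f x" using Suc.prems(2) sub by blast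
  ultimately have h1: "h \<in> Gn P le les n" by (rule Suc.IH)
  have b: "bij_betw f (An P le les (Suc n)) (An P le les (Suc n))" using Suc.prems(1) by (rule Gn_bij)
  have h2: "bij_betw h (An P le les (Suc n)) (An P le les (Suc n))"
    using bij_betw_cong[of "An P le les (Suc n)" h f "An P le les (Suc n)"] b Suc.prems(2) by blast
  have fc: "\<forall>b\<in>An P le les (Suc n) - An P le les n.
           pr1 (f b) = pr1 b \<and> pr2 (f b) = f (pr2 b)"
    using Suc.prems(1) unfolding Gn.simps mem_Collect_eq by (elim conjE)
  have h3: "\<forall>b\<in>An P le les (Suc n) - An P le les n.
           pr1 (h b) = pr1 b \<and> pr2 (h b) = h (pr2 b)"
  proof
    fix b assume b: "b \<in> An P le les (Suc n) - An P le les n"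
    then obtain q a k where bq: "b = Q (Suc n) q a k" "a \<in> An P le les n"
      using An_new by blast
    have "h b = f b" using b Suc.prems(2) by blast
    moreover have "h a = f a" using bq(2) Suc.prems(2) sub by blast
    moreover have "pr1 (f b) = pr1 b \<and> pr2 (f b) = f (pr2 b)" using fc b by blast
    ultimately show "pr1 (h b) = pr1 b \<and> pr2 (h b) = h (pr2 b)"
      using bq(1) by simp
  qed
  show ?case using h1 h2 h3 by (simp only: Gn.simps mem_Collect_eq simp_thms)
qed

lemma bij_union_chain:
  assumes "\<And>n. bij_betw f (An P le les n) (An P le les n)"
  shows "bij_betw f (Aall P le les) (Aall P le les)"
proof -
  have inj: "inj_on f (Aall P le les)"
  proof (rule inj_onI)
    fix x y assume "x \<in> Aall P le les" "y \<in> Aall P le les" "f x = f y"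
    then obtain i j where "x \<in> An P le les i" "y \<in> An P le les j"
      by (auto simp: Aall_def)
    then have "x \<in> An P le les (max i j)" "y \<in> An P le les (max i j)"
      using An_mono[of i "max i j" P le les] An_mono[of j "max i j" P le les] by auto
    then show "x = y" using assms[of "max i j"] \<open>f x = f y\<close>
      by (auto simp: bij_betw_def inj_on_def)
  qed
  have "f ` Aall P le les = Aall P le les"
    using assms by (auto simp: Aall_def bij_betw_def image_UN)
  then show ?thesis using inj by (simp add: bij_betw_def)
qed

theorem lemma2p3:
  fixes P :: "'p set" and le les :: "'p rel" and C :: "'p quad set" and m :: nat
    and g :: "'p quad \<Rightarrow> 'p quad"
  assumes "le \<subseteq> P \<times> P" and "partial_order_on P le"
    and "les \<subseteq> P \<times> P" and "preorder_on P les"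
    and "le \<subseteq> les"
    and "closed_set P le les C"
    and "g \<in> Gn P le les m"
    and "\<forall>a\<in>C \<inter> An P le les m. g a = a"
  shows "\<exists>\<pi>\<in>Gall P le les. (\<forall>a\<in>An P le les m. \<pi> a = g a) \<and> (\<forall>c\<in>C. \<pi> c = c)"
proof -
  define \<pi> where "\<pi> = ext g m"
  have agree: "\<pi> x = g x" if xn: "x \<in> An P le les n" "n \<le> m" for x n
  proof -
    obtain j q a k where "x = Q j q a k" using An_pr0[OF xn(1)] by (cases x) auto
    moreover have "j \<le> m" using An_pr0[OF xn(1)] xn(2) calculation by auto
    ultimately show ?thesis by (simp add: \<pi>_def)
  qed
  have newval: "\<pi> (Q j q a k) = Q j q (\<pi> a) k" if "m < j" for j q a k
    using that by (simp add: \<pi>_def)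
  have G: "\<pi> \<in> Gn P le les n" for n
  proof (induction n)
    case 0
    have "\<forall>x\<in>An P le les 0. \<pi> x = g x" using agree by blast
    then show ?case by (rule Gn_cong[OF Gn_mono[OF _ assms(7)], rotated]) simp
  next
    case (Suc n)
    show ?case
    proof (cases "Suc n \<le> m")
      case True
      have "\<forall>x\<in>An P le les (Suc n). \<pi> x = g x" using agree True by blast
      then show ?thesis by (rule Gn_cong[OF Gn_mono[OF True assms(7)]])
    next
      case False
      let ?A = "An P le les n" and ?B = "An P le les (Suc n)"
      have bA: "bij_betw \<pi> ?A ?A" using Gn_bij[OF Suc.IH] .
      have p1: "pr1 (\<pi> x) = pr1 x" if "x \<in> ?A" for x using Gn_pr1[OF Suc.IH that] .
      have nv: "\<pi> (Q (Suc n) q a k) = Q (Suc n) q (\<pi> a) k" for q a k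
        using newval False by simp
      have imA: "\<pi> ` ?A = ?A" using bA by (simp add: bij_betw_def)
      have injA: "inj_on \<pi> ?A" using bA by (simp add: bij_betw_def)
      have sub: "?A \<subseteq> ?B" by (rule An_mono_Suc)
      have imN: "\<pi> ` (?B - ?A) = ?B - ?A"
      proof
        show "\<pi> ` (?B - ?A) \<subseteq> ?B - ?A"
        proof
          fix y assume "y \<in> \<pi> ` (?B - ?A)"
          then obtain x where x: "x \<in> ?B - ?A" "y = \<pi> x" by blast
          then obtain q a k where xq: "x = Q (Suc n) q a k" "a \<in> ?A" using An_new by blast
          have "\<pi> a \<in> ?A" using xq imA by blast
          then have "Q (Suc n) q (\<pi> a) k \<in> ?B"
            using x xq p1[OF xq(2)] by auto
          then have "Q (Suc n) q (\<pi> a) k \<in> ?B - ?A" using Q_notin[of n q "\<pi> a" k P le les] by blast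
          moreover have "y = Q (Suc n) q (\<pi> a) k" using x xq nv by simp
          ultimately show "y \<in> ?B - ?A" by (simp only:)
        qed
      next
        show "?B - ?A \<subseteq> \<pi> ` (?B - ?A)"
        proof
          fix y assume y: "y \<in> ?B - ?A"
          then obtain q a' k where yq: "y = Q (Suc n) q a' k" "a' \<in> ?A" using An_new by blast
          then obtain a where a: "a \<in> ?A" "a' = \<pi> a" using imA by blast
          have "Q (Suc n) q a k \<in> ?B"
            using y yq a p1[OF a(1)] by auto
          then have "Q (Suc n) q a k \<in> ?B - ?A" using Q_notin[of n q a k P le les] by blast
          moreover have "\<pi> (Q (Suc n) q a k) = y" using nv yq a by simp
          ultimately show "y \<in> \<pi> ` (?B - ?A)" by blast
        qed
      qed
      have injN: "inj_on \<pi> (?B - ?A)"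
      proof (rule inj_onI)
        fix x y assume x: "x \<in> ?B - ?A" and y: "y \<in> ?B - ?A" and e: "\<pi> x = \<pi> y"
        obtain q a k where xq: "x = Q (Suc n) q a k" "a \<in> ?A" using An_new x by blast
        obtain q' a' k' where yq: "y = Q (Suc n) q' a' k'" "a' \<in> ?A" using An_new y by blast
        have "q = q'" "k = k'" "\<pi> a = \<pi> a'" using e xq yq nv by auto
        then show "x = y" using injA xq yq by (auto simp: inj_on_def)
      qed
      have BU: "?B = ?A \<union> (?B - ?A)" using sub by blast
      have "inj_on \<pi> (?A \<union> (?B - ?A))"
        unfolding inj_on_Un using injA injN imA imN by blast
      then have injB: "inj_on \<pi> ?B" using BU by metis
      have "\<pi> ` (?A \<union> (?B - ?A)) = ?A \<union> (?B - ?A)"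
        unfolding image_Un imA imN by (rule refl)
      then have imB: "\<pi> ` ?B = ?B" using BU by metis
      have bB: "bij_betw \<pi> ?B ?B" using injB imB by (simp add: bij_betw_def)
      have cond: "\<forall>b\<in>?B - ?A. pr1 (\<pi> b) = pr1 b \<and> pr2 (\<pi> b) = \<pi> (pr2 b)"
      proof
        fix b assume "b \<in> ?B - ?A"
        then obtain q a k where "b = Q (Suc n) q a k" using An_new by blast
        then show "pr1 (\<pi> b) = pr1 b \<and> pr2 (\<pi> b) = \<pi> (pr2 b)" using nv by simp
      qed
      show ?thesis using bB Suc.IH cond by simp
    qed
  qed
  have Gall: "\<pi> \<in> Gall P le les"
    using G bij_union_chain[of \<pi> P le les, OF Gn_bij[OF G]] by (simp add: Gall_def)
  have cl: "C \<subseteq> Aall P le les" "\<forall>b\<in>C - An P le les 0. pr2 b \<in> C"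
    using assms(6) by (auto simp: closed_set_def)
  have fixC: "\<pi> c = c" if "c \<in> C" "c \<in> An P le les n" for c n
    using that
  proof (induction n arbitrary: c)
    case 0
    then have "c \<in> An P le les m" using An_mono[of 0 m P le les] by blast
    then show ?case using agree[of c 0] assms(8) 0 by auto
  next
    case (Suc n)
    show ?case
    proof (cases "c \<in> An P le les n")
      case True then show ?thesis using Suc by blast
    next
      case False
      then obtain q a k where cq: "c = Q (Suc n) q a k" "a \<in> An P le les n"
        using An_new Suc.prems by blast
      show ?thesis
      proof (cases "Suc n \<le> m")
        case True
        then have "c \<in> An P le les m" using An_mono[of "Suc n" m P le les] Suc.prems by blast
        then show ?thesis using agree[of c "Suc n"] assms(8) Suc.prems True by auto
      next
        case F: False
        have "c \<notin> An P le les 0" using False An_mono[of 0 n P le les] by blast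
        then have "c \<in> C - An P le les 0" using Suc.prems by blast
        then have "pr2 c \<in> C" using cl(2) by blast
        then have "a \<in> C" using cq by simp
        then have "\<pi> a = a" using Suc.IH cq by blast
        then show ?thesis using newval F cq by simp
      qed
    qed
  qed
  show ?thesis
  proof (intro bexI[OF _ Gall] conjI ballI)
    fix a assume "a \<in> An P le les m" then show "\<pi> a = g a" using agree by blast
  next
    fix c assume c: "c \<in> C"
    then obtain n where "c \<in> An P le les n" using cl(1) by (auto simp: Aall_def)
    then show "\<pi> c = c" using fixC c by blast
  qed
qed

end
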